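(* Let $N\ge 1$ and $\alpha\in\mathbb{C}$ with $|\alpha|=1$. The augmented Laplacian $L_\alpha(\mathcal{B}_N)=L(\mathcal{B}_N)+C_\alpha$ has a complete set of eigenvectors each of which is of one of the following forms: (i) $h$ is a Dirichlet eigenvector of $L(\mathcal{B}_N)$ (and its $L_\alpha(\mathcal{B}_N)$-eigenvalue equals its $L(\mathcal{B}_N)$-eigenvalue), or (ii) $h=\sum_{\kappa=0}^N c_\kappa(\alpha)h_{n,\kappa}$ for some coefficients $c_\kappa(\alpha)\in\mathbb{C}$. There are $N+1$ mutually orthogonal eigenvectors of $L_\alpha(\mathcal{B}_N)$ of the second type.
   Context: $L(\mathcal{B}_N)$ is the unnormalized Laplacian $(Lf)(v)=\sum_{w\sim v}[f(v)-f(w)]$ of the Boolean cube $\mathcal{B}_N$ (vertex set $\mathbb{Z}_2^N$, $v\sim w$ iff $v-w=e_i$ for a standard basis vector $e_i$). Write $\mathbf{0}=(0,\dots,0)$, $\mathbf{1}=(1,\dots,1)$. For $\alpha\ne0$, the corner operator $C_\alpha$ on vertex functions of $\mathcal{B}_N$ is defined by $(C_\alpha f)(\mathbf{0})=f(\mathbf{0})-f(\mathbf{1})/\alpha$, $(C_\alpha f)(\mathbf{1})=f(\mathbf{1})-\alpha f(\mathbf{0})$, and $(C_\alpha f)(v)=0$ for $v\notin\{\mathbf{0},\mathbf{1}\}$. A Dirichlet eigenvector of $L(\mathcal{B}_N)$ is an eigenvector vanishing at $\mathbf{0}$ and $\mathbf{1}$. For $\gamma\in\mathbb{Z}_2^N$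 let $|\gamma|$ be its number of coordinates equal to $1$ and $h_\gamma(v)=2^{-N/2}(-1)^{\langle v,\gamma\rangle}$; for $\kappa=0,\dots,N$, $h_{n,\kappa}=c_\kappa\sum_{|\gamma|=\kappa}h_\gamma$ with $c_\kappa>0$ chosen so that $\|h_{n,\kappa}\|=1$. *)

theory Defs
  imports Complex_Main
begin

text \<open>Vertices of the Boolean cube B_N: elements of Z_2^N, encoded as subsets of {..<N}
  (the support of the 0/1 vector).  Vertex functions are maps nat set => complex that
  vanish outside the vertex set.  0 = {} and 1 = {..<N}; adding e_i is symmetric difference
  with {i}; the pairing <v,gamma> mod 2 is card (v \<inter> gamma) mod 2; |gamma| = card gamma.\<close>

definition cube_vertices :: "nat \<Rightarrow> nat set set" where
  "cube_vertices N = Pow {..<N}"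

definition vfuns :: "nat \<Rightarrow> (nat set \<Rightarrow> complex) set" where
  "vfuns N = {f. \<forall>v. v \<notin> cube_vertices N \<longrightarrow> f v = 0}"

definition cube_laplacian :: "nat \<Rightarrow> (nat set \<Rightarrow> complex) \<Rightarrow> nat set \<Rightarrow> complex" where
  "cube_laplacian N f v =
     (if v \<in> cube_vertices N then (\<Sum>i<N. f v - f (v - {i} \<union> ({i} - v))) else 0)"

definition corner_op :: "nat \<Rightarrow> complex \<Rightarrow> (nat set \<Rightarrow> complex) \<Rightarrow> nat set \<Rightarrow> complex" where
  "corner_op N \<alpha> f v =
     (if v = {} then f {} - f {..<N} / \<alpha>
      else if v = {..<N} then f {..<N} - \<alpha> * f {}
      else 0)"

definition aug_laplacian :: "nat \<Rightarrow> complex \<Rightarrow> (nat set \<Rightarrow> complex) \<Rightarrow> nat set \<Rightarrow> complex" where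
  "aug_laplacian N \<alpha> f v = cube_laplacian N f v + corner_op N \<alpha> f v"

definition cinner :: "nat \<Rightarrow> (nat set \<Rightarrow> complex) \<Rightarrow> (nat set \<Rightarrow> complex) \<Rightarrow> complex" where
  "cinner N f g = (\<Sum>v\<in>cube_vertices N. f v * cnj (g v))"

definition vnorm :: "nat \<Rightarrow> (nat set \<Rightarrow> complex) \<Rightarrow> real" where
  "vnorm N f = sqrt (\<Sum>v\<in>cube_vertices N. (cmod (f v))\<^sup>2)"

definition hgamma :: "nat \<Rightarrow> nat set \<Rightarrow> nat set \<Rightarrow> complex" where
  "hgamma N \<gamma> v = (if v \<in> cube_vertices N
      then complex_of_real (2 powr (- real N / 2)) * (-1) ^ card (v \<inter> \<gamma>) else 0)"

definition hsum :: "nat \<Rightarrow> nat \<Rightarrow> nat set \<Rightarrow> complex" where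
  "hsum N k v = (\<Sum>\<gamma>\<in>{\<gamma>\<in>cube_vertices N. card \<gamma> = k}. hgamma N \<gamma> v)"

definition hnk :: "nat \<Rightarrow> nat \<Rightarrow> nat set \<Rightarrow> complex" where
  "hnk N k v = hsum N k v / complex_of_real (vnorm N (hsum N k))"

definition is_eigvec :: "nat \<Rightarrow> ((nat set \<Rightarrow> complex) \<Rightarrow> nat set \<Rightarrow> complex)
     \<Rightarrow> (nat set \<Rightarrow> complex) \<Rightarrow> complex \<Rightarrow> bool" where
  "is_eigvec N A h mu \<longleftrightarrow> h \<in> vfuns N \<and> h \<noteq> (\<lambda>_. 0) \<and> A h = (\<lambda>v. mu * h v)"

definition dirichlet_eigvec :: "nat \<Rightarrow> (nat set \<Rightarrow> complex) \<Rightarrow> complex \<Rightarrow> bool" where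
  "dirichlet_eigvec N h mu \<longleftrightarrow> is_eigvec N (cube_laplacian N) h mu \<and> h {} = 0 \<and> h {..<N} = 0"

definition lin_indep :: "nat \<Rightarrow> (nat set \<Rightarrow> complex) set \<Rightarrow> bool" where
  "lin_indep N B \<longleftrightarrow> (\<forall>c. (\<forall>v. (\<Sum>b\<in>B. c b * b v) = 0) \<longrightarrow> (\<forall>b\<in>B. c b = 0))"

definition spans :: "nat \<Rightarrow> (nat set \<Rightarrow> complex) set \<Rightarrow> bool" where
  "spans N B \<longleftrightarrow> (\<forall>f\<in>vfuns N. \<exists>c. f = (\<lambda>v. \<Sum>b\<in>B. c b * b v))"

end

theory Submission
  imports Defs "HOL-Library.Function_Algebras" "HOL-Computational_Algebra.Fundamental_Theorem_Algebra"
begin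

definition sc :: "complex \<Rightarrow> (nat set \<Rightarrow> complex) \<Rightarrow> (nat set \<Rightarrow> complex)" where
  "sc c f = (\<lambda>v. c * f v)"

interpretation vs: vector_space sc
  by unfold_locales (auto simp: sc_def fun_eq_iff algebra_simps)

lemma sum_fun_apply: "(\<Sum>b\<in>B. F b) v = (\<Sum>b\<in>B. F b v)"
  by (induction B rule: infinite_finite_induct) auto

lemma span_finite_explicit:
  assumes "finite S"
  shows "f \<in> vs.span S \<longleftrightarrow> (\<exists>u. f = (\<lambda>v. \<Sum>b\<in>S. u b * b v))"
  using assms by (auto simp: vs.span_finite sc_def fun_eq_iff sum_fun_apply)

lemma finite_cube[simp]: "finite (cube_vertices N)"
  by (simp add: cube_vertices_def)

lemma sc_apply[simp]: "sc c f v = c * f v" by (simp add: sc_def)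

lemma cinner_add_left: "cinner N (f + g) h = cinner N f h + cinner N g h"
  by (simp add: cinner_def algebra_simps sum.distrib)
lemma cinner_add_right: "cinner N h (f + g) = cinner N h f + cinner N h g"
  by (simp add: cinner_def algebra_simps sum.distrib)
lemma cinner_diff_left: "cinner N (f - g) h = cinner N f h - cinner N g h"
  by (simp add: cinner_def algebra_simps sum_subtractf)
lemma cinner_diff_right: "cinner N h (f - g) = cinner N h f - cinner N h g"
  by (simp add: cinner_def algebra_simps sum_subtractf)
lemma cinner_sc_left: "cinner N (sc c f) h = c * cinner N f h"
  by (simp add: cinner_def algebra_simps sum_distrib_left sc_apply)
lemma cinner_sc_right: "cinner N h (sc c f) = cnj c * cinner N h f"
  by (simp add: cinner_def algebra_simps sum_distrib_left sc_apply)
lemma cinner_zero_left[simp]: "cinner N 0 h = 0"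
  by (simp add: cinner_def)
lemma cinner_zero_right[simp]: "cinner N h 0 = 0"
  by (simp add: cinner_def)
lemma cinner_sym: "cinner N g f = cnj (cinner N f g)"
  by (simp add: cinner_def mult.commute)
lemma cinner_sum_left: "cinner N (\<Sum>b\<in>B. F b) h = (\<Sum>b\<in>B. cinner N (F b) h)"
  by (simp add: cinner_def sum_fun_apply sum_distrib_right) (rule sum.swap)
lemma cinner_sum_right: "cinner N h (\<Sum>b\<in>B. F b) = (\<Sum>b\<in>B. cinner N h (F b))"
  by (simp add: cinner_def sum_fun_apply sum_distrib_left) (rule sum.swap)

lemma cinner_self_real: "cinner N f f = of_real (\<Sum>v\<in>cube_vertices N. (cmod (f v))\<^sup>2)"
  unfolding cinner_def of_real_sum by (simp add: complex_norm_square del: of_real_power)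

lemma vfuns_nonzero: "f \<in> vfuns N \<Longrightarrow> f \<noteq> 0 \<Longrightarrow> \<exists>v\<in>cube_vertices N. f v \<noteq> 0"
  by (auto simp: vfuns_def fun_eq_iff)

lemma cinner_self_nonzero:
  assumes "f \<in> vfuns N" "f \<noteq> 0" shows "cinner N f f \<noteq> 0"
proof -
  obtain w where w: "w \<in> cube_vertices N" "f w \<noteq> 0" using vfuns_nonzero[OF assms] by blast
  have "(cmod (f w))\<^sup>2 \<le> (\<Sum>v\<in>cube_vertices N. (cmod (f v))\<^sup>2)"
    by (rule member_le_sum) (use w in auto)
  moreover have "(cmod (f w))\<^sup>2 > 0" using w by simp
  ultimately have "(\<Sum>v\<in>cube_vertices N. (cmod (f v))\<^sup>2) \<noteq> 0" by linarith
  then show ?thesis unfolding cinner_self_real of_real_eq_0_iff .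
qed

lemma vfuns_subspace: "vs.subspace (vfuns N)"
  by (auto simp: vs.subspace_def vfuns_def)

definition Dl :: "nat \<Rightarrow> (nat set \<Rightarrow> complex) set" where
  "Dl N = (\<lambda>w v. if v = w then 1 else 0) ` cube_vertices N"

lemma finite_Dl[simp]: "finite (Dl N)" by (simp add: Dl_def)

lemma vfuns_span_Dl: "vfuns N \<subseteq> vs.span (Dl N)"
proof
  fix f assume f: "f \<in> vfuns N"
  have "f = (\<Sum>w\<in>cube_vertices N. sc (f w) (\<lambda>v. if v = w then 1 else 0))"
    using f by (auto simp: fun_eq_iff sum_fun_apply vfuns_def if_distrib cong: if_cong)
  also have "\<dots> \<in> vs.span (Dl N)"
    by (intro vs.span_sum vs.span_scale vs.span_base) (auto simp: Dl_def)
  finally show "f \<in> vs.span (Dl N)" .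
qed

definition orthset :: "nat \<Rightarrow> (nat set \<Rightarrow> complex) set \<Rightarrow> bool" where
  "orthset N E \<longleftrightarrow> (\<forall>a\<in>E. \<forall>b\<in>E. a \<noteq> b \<longrightarrow> cinner N a b = 0)"

lemma orth_coeffs_zero:
  assumes E: "finite E" "E \<subseteq> vfuns N" "orthset N E" "0 \<notin> E"
    and s: "(\<Sum>e\<in>E. sc (u e) e) = 0" and e: "e \<in> E"
  shows "u e = 0"
proof -
  have "0 = cinner N (\<Sum>e\<in>E. sc (u e) e) e" using s by simp
  also have "\<dots> = (\<Sum>e'\<in>E. u e' * cinner N e' e)" by (simp add: cinner_sum_left cinner_sc_left)
  also have "\<dots> = u e * cinner N e e"
    using E e by (subst sum.remove[of _ e]) (auto simp: orthset_def intro!: sum.neutral)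
  finally have "u e * cinner N e e = 0" by simp
  moreover have "cinner N e e \<noteq> 0" using E e by (intro cinner_self_nonzero) auto
  ultimately show ?thesis by simp
qed

lemma orth_independent:
  assumes E: "finite E" "E \<subseteq> vfuns N" "orthset N E" "0 \<notin> E"
  shows "vs.independent E"
  using orth_coeffs_zero[OF E] E(1) by (auto simp: vs.dependent_finite)

lemma orth_card_bound:
  assumes E: "finite E" "E \<subseteq> vfuns N" "orthset N E" "0 \<notin> E"
  shows "card E \<le> card (Dl N)"
  using vs.independent_span_bound[OF finite_Dl orth_independent[OF E]] vfuns_span_Dl E(2) by blast

lemma orth_sum_inner:
  assumes "finite E" "orthset N E" "e \<in> E"
  shows "cinner N (\<Sum>e\<in>E. sc (u e) e) e = u e * cinner N e e"
proof -
  have "cinner N (\<Sum>e\<in>E. sc (u e) e) e = (\<Sum>e'\<in>E. u e' * cinner N e' e)"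
    by (simp add: cinner_sum_left cinner_sc_left)
  also have "\<dots> = u e * cinner N e e"
    using assms by (subst sum.remove[of _ e]) (auto simp: orthset_def intro!: sum.neutral)
  finally show ?thesis .
qed

definition good :: "nat \<Rightarrow> ((nat set \<Rightarrow> complex) \<Rightarrow> (nat set \<Rightarrow> complex)) \<Rightarrow> (nat set \<Rightarrow> complex) set
   \<Rightarrow> (nat set \<Rightarrow> complex) set \<Rightarrow> bool" where
  "good N T X E \<longleftrightarrow> finite E \<and> E \<subseteq> X \<and> orthset N E \<and> 0 \<notin> E \<and> (\<forall>e\<in>E. \<exists>\<mu>. T e = sc \<mu> e)"

locale herm =
  fixes N :: nat and T :: "(nat set \<Rightarrow> complex) \<Rightarrow> (nat set \<Rightarrow> complex)"
  assumes T_add: "T (\<lambda>v. f v + g v) = (\<lambda>v. T f v + T g v)"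
    and T_sc: "T (\<lambda>v. c * f v) = (\<lambda>v. c * T f v)"
    and T_V: "f \<in> vfuns N \<Longrightarrow> T f \<in> vfuns N"
    and T_herm: "cinner N (T f) g = cinner N f (T g)"
begin

lemma T_zero: "T (\<lambda>v. 0) = (\<lambda>v. 0)"
  using T_sc[of 0 "\<lambda>v. 0"] by simp

lemma T_zero': "T 0 = 0"
  using T_zero by (simp add: zero_fun_def)

lemma T_diff: "T (\<lambda>v. f v - g v) = (\<lambda>v. T f v - T g v)"
proof -
  have "T (\<lambda>v. f v - g v) = T (\<lambda>v. f v + (\<lambda>v. (-1) * g v) v)" by simp
  also have "\<dots> = (\<lambda>v. T f v + T (\<lambda>v. (-1) * g v) v)" by (rule T_add)
  also have "\<dots> = (\<lambda>v. T f v + (\<lambda>v. (-1) * T g v) v)" by (subst T_sc) (rule refl)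
  finally show ?thesis by simp
qed

lemma Tpow_add: "(T^^i) (\<lambda>v. f v + g v) = (\<lambda>v. (T^^i) f v + (T^^i) g v)"
  by (induction i) (auto simp: T_add)
lemma Tpow_sc: "(T^^i) (\<lambda>v. c * f v) = (\<lambda>v. c * (T^^i) f v)"
  by (induction i) (auto simp: T_sc)
lemma Tpow_diff: "(T^^i) (\<lambda>v. f v - g v) = (\<lambda>v. (T^^i) f v - (T^^i) g v)"
  by (induction i) (auto simp: T_diff)
lemma Tpow_V: "f \<in> vfuns N \<Longrightarrow> (T^^i) f \<in> vfuns N"
  by (induction i) (auto simp: T_V)

definition pev :: "nat \<Rightarrow> complex poly \<Rightarrow> (nat set \<Rightarrow> complex) \<Rightarrow> (nat set \<Rightarrow> complex)" where
  "pev K p y = (\<lambda>v. \<Sum>i\<le>K. coeff p i * (T^^i) y v)"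

lemma lin_factor: "[:-z, 1:] * q = pCons 0 q - smult z (q :: complex poly)"
  by (rule poly_eqI) (auto simp: coeff_pCons split: nat.split)

lemma pev_factor:
  assumes "degree q < K"
  shows "pev K ([:-z, 1:] * q) y = pev K q (\<lambda>v. T y v - z * y v)"
proof -
  obtain K' where K: "K = Suc K'" using assms by (cases K) auto
  have cq: "coeff q K = 0" using assms by (simp add: coeff_eq_0)
  show ?thesis
  proof
    fix v
    have "pev K ([:-z, 1:] * q) y v = (\<Sum>i\<le>K. coeff (pCons 0 q) i * (T^^i) y v) - z * (\<Sum>i\<le>K. coeff q i * (T^^i) y v)"
      by (simp add: pev_def lin_factor algebra_simps sum_subtractf sum_distrib_left)
    also have "(\<Sum>i\<le>K. coeff (pCons 0 q) i * (T^^i) y v) = (\<Sum>i\<le>K'. coeff q i * (T^^i) (T y) v)"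
      unfolding K sum.atMost_Suc_shift by (simp add: funpow_Suc_right del: funpow.simps)
    also have "\<dots> = (\<Sum>i\<le>K. coeff q i * (T^^i) (T y) v)"
      using cq K by simp
    finally show "pev K ([:-z, 1:] * q) y v = pev K q (\<lambda>v. T y v - z * y v) v"
      by (simp add: pev_def Tpow_diff Tpow_sc algebra_simps sum_subtractf sum_distrib_left)
  qed
qed

lemma pev_const:
  assumes "degree p = 0"
  shows "pev K p y = sc (coeff p 0) y"
proof -
  have "\<And>i. i \<noteq> 0 \<Longrightarrow> coeff p i = 0" using assms by (simp add: coeff_eq_0)
  then show ?thesis unfolding pev_def
    by (auto simp: fun_eq_iff atMost_atLeast0 sum.atLeast0_atMost_Suc_shift intro!: sum.neutral
        simp del: sum.atMost_Suc) (subst sum.remove[of _ 0]; auto intro!: sum.neutral)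
qed

lemma krylov_poly:
  assumes U: "vs.subspace U" "\<And>u. u \<in> U \<Longrightarrow> T u \<in> U"
  shows "degree p \<le> K \<Longrightarrow> p \<noteq> 0 \<Longrightarrow> y \<in> U \<Longrightarrow> y \<noteq> 0 \<Longrightarrow> pev K p y = 0
     \<Longrightarrow> \<exists>z\<in>U. z \<noteq> 0 \<and> (\<exists>\<mu>. T z = sc \<mu> z)"
proof (induction "degree p" arbitrary: p y rule: less_induct)
  case less
  show ?case
  proof (cases "degree p = 0")
    case True
    then have "sc (coeff p 0) y = 0" using less pev_const by simp
    moreover have "coeff p 0 \<noteq> 0" using True less(3) leading_coeff_0_iff by fastforce
    ultimately have "y = 0" by (auto simp: fun_eq_iff)
    then show ?thesis using less by simp
  next
    case False
    then have "\<not> constant (poly p)" by (simp add: constant_degree)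
    then obtain z where "poly p z = 0" using fundamental_theorem_of_algebra by blast
    then have "[:-z, 1:] dvd p" by (simp add: poly_eq_0_iff_dvd)
    then obtain q where pq: "p = [:-z, 1:] * q" by (auto elim: dvdE)
    have q0: "q \<noteq> 0" using less(3) pq by auto
    have "degree ([:-z,1:] * q) = degree [:-z,1:] + degree q" by (rule degree_mult_eq) (use q0 in auto)
    then have dq: "degree p = Suc (degree q)" using pq by simp
    have ev: "pev K q (\<lambda>v. T y v - z * y v) = 0"
      using less(6) pev_factor[of q K z y] dq less(2) pq by simp
    have yy: "(\<lambda>v. T y v - z * y v) = T y - sc z y" by (simp add: fun_eq_iff)
    show ?thesis
    proof (cases "T y - sc z y = 0")
      case True
      then show ?thesis using less(4,5) by (intro bexI[of _ y]) auto
    next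
      case False
      have "T y - sc z y \<in> U"
        using U less(4) by (intro vs.subspace_diff) (auto simp: vs.subspace_scale)
      then show ?thesis
        using less(1)[of q "T y - sc z y"] dq less(2) q0 False ev unfolding yy by simp
    qed
  qed
qed


lemma krylov_dep:
  assumes y: "y \<in> vfuns N"
  shows "\<exists>a. (\<exists>i\<le>card (Dl N). a i \<noteq> 0) \<and> (\<lambda>v. \<Sum>i\<le>card (Dl N). a i * (T^^i) y v) = (\<lambda>v. 0)"
proof -
  define M where "M = card (Dl N)"
  define u where "u = (\<lambda>i. (T^^i) y)"
  have uV: "u i \<in> vfuns N" for i unfolding u_def by (rule Tpow_V[OF y])
  show ?thesis
  proof (cases "inj_on u {..M}")
    case True
    define S where "S = u ` {..M}"
    have fS: "finite S" and cS: "card S = Suc M" using True by (auto simp: S_def card_image)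
    have "S \<subseteq> vs.span (Dl N)" using uV vfuns_span_Dl unfolding S_def by blast
    then have "\<not> vs.independent S"
      using vs.independent_span_bound[OF finite_Dl[of N], of S] cS M_def by auto
    then obtain w where w: "\<exists>x\<in>S. w x \<noteq> 0" "(\<Sum>x\<in>S. sc (w x) x) = 0"
      using vs.dependent_finite[OF fS] by blast
    have "(\<lambda>v. \<Sum>i\<le>M. w (u i) * u i v) = (\<lambda>v. \<Sum>x\<in>S. w x * x v)"
      unfolding S_def by (subst sum.reindex[OF True]) simp
    also have "\<dots> = (\<lambda>v. 0)" using w(2) by (simp add: fun_eq_iff sum_fun_apply)
    finally show ?thesis using w(1) unfolding S_def M_def u_def
      by (intro exI[of _ "\<lambda>i. w (u i)"]) (auto simp: u_def)
  next
    case False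
    then obtain i j where ij: "i \<le> M" "j \<le> M" "i \<noteq> j" "u i = u j"
      unfolding inj_on_def by auto
    define a where "a = (\<lambda>k. if k = i then (1::complex) else if k = j then -1 else 0)"
    have "(\<Sum>k\<le>M. a k * u k v) = 0" for v
    proof -
      have "(\<Sum>k\<le>M. a k * u k v) = (\<Sum>k\<le>M. (if k = i then u i v else 0) + (if k = j then - u j v else 0))"
        by (rule sum.cong) (use ij(3) in \<open>auto simp: a_def\<close>)
      also have "\<dots> = u i v - u j v" using ij(1,2) by (simp add: sum.distrib)
      finally show ?thesis using ij(4) by simp
    qed
    then show ?thesis using ij unfolding M_def u_def
      by (intro exI[of _ a]) (auto simp: a_def fun_eq_iff u_def)
  qed
qed

lemma eigvec_exists:
  assumes U: "vs.subspace U" "U \<subseteq> vfuns N" "\<And>u. u \<in> U \<Longrightarrow> T u \<in> U"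
    and y: "y \<in> U" "y \<noteq> 0"
  shows "\<exists>z\<in>U. z \<noteq> 0 \<and> (\<exists>\<mu>. T z = sc \<mu> z)"
proof -
  define M where "M = card (Dl N)"
  obtain a where a: "\<exists>i\<le>M. a i \<noteq> 0" "(\<lambda>v. \<Sum>i\<le>M. a i * (T^^i) y v) = (\<lambda>v. 0)"
    using krylov_dep[of y] y U unfolding M_def by blast
  define p where "p = (\<Sum>i\<le>M. monom (a i) i)"
  have cp: "coeff p k = (if k \<le> M then a k else 0)" for k
    unfolding p_def by (simp add: coeff_sum coeff_monom)
  have p0: "p \<noteq> 0" using a(1) cp by (metis coeff_0)
  have dp: "degree p \<le> M" by (rule degree_le) (simp add: cp)
  have "pev M p y = (\<lambda>v. \<Sum>i\<le>M. a i * (T^^i) y v)" unfolding pev_def by (simp add: cp)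
  then have "pev M p y = 0" using a(2) by (simp add: zero_fun_def)
  then show ?thesis using krylov_poly[OF U(1) U(3) dp p0 y] by blast
qed

lemma step:
  assumes X: "vs.subspace X" "X \<subseteq> vfuns N" "\<And>x. x \<in> X \<Longrightarrow> T x \<in> X"
    and E: "good N T X E" and x: "x \<in> X" "x \<notin> vs.span E"
  shows "\<exists>E'. good N T X E' \<and> card E' = Suc (card E)"
proof -
  have fE: "finite E" and EX: "E \<subseteq> X" and oE: "orthset N E" and zE: "0 \<notin> E"
    and eE: "\<And>e. e \<in> E \<Longrightarrow> \<exists>\<mu>. T e = sc \<mu> e"
    using E unfolding good_def by auto
  have EV: "E \<subseteq> vfuns N" using EX X(2) by blast
  define y where "y = x - (\<Sum>e\<in>E. sc (cinner N x e / cinner N e e) e)"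
  have proj: "(\<Sum>e\<in>E. sc (cinner N x e / cinner N e e) e) \<in> vs.span E"
    by (intro vs.span_sum vs.span_scale vs.span_base)
  have yX: "y \<in> X" unfolding y_def
    using X(1) x(1) EX vs.span_minimal[OF EX X(1)] proj by (intro vs.subspace_diff) auto
  have y0: "y \<noteq> 0" using x(2) proj unfolding y_def by auto
  have yo: "cinner N y e = 0" if e: "e \<in> E" for e
  proof -
    have ne: "cinner N e e \<noteq> 0" using e EV zE by (intro cinner_self_nonzero) auto
    show ?thesis unfolding y_def cinner_diff_left orth_sum_inner[OF fE oE e] using ne by simp
  qed
  define U where "U = {u \<in> X. \<forall>e\<in>E. cinner N u e = 0}"
  have sU: "vs.subspace U"
    using X(1) unfolding U_def vs.subspace_def
    by (auto simp: cinner_add_left cinner_sc_left)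
  have UV: "U \<subseteq> vfuns N" using X(2) U_def by auto
  have TU: "T u \<in> U" if u: "u \<in> U" for u
  proof -
    have "cinner N (T u) e = 0" if e: "e \<in> E" for e
    proof -
      obtain \<mu> where "T e = sc \<mu> e" using eE e by blast
      then have "cinner N (T u) e = cnj \<mu> * cinner N u e" by (simp add: T_herm cinner_sc_right)
      then show ?thesis using u e U_def by simp
    qed
    then show ?thesis using u X(3) U_def by auto
  qed
  obtain z where z: "z \<in> U" "z \<noteq> 0" "\<exists>\<mu>. T z = sc \<mu> z"
    using eigvec_exists[OF sU UV TU, of y] yX yo y0 U_def by blast
  have zV: "z \<in> vfuns N" using z UV by auto
  have zE': "z \<notin> E"
  proof
    assume "z \<in> E"
    then have "cinner N z z = 0" using z(1) U_def by auto
    then show False using cinner_self_nonzero[OF zV z(2)] by simp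
  qed
  have "good N T X (insert z E)"
    unfolding good_def orthset_def
  proof (intro conjI ballI impI)
    show "finite (insert z E)" using fE by simp
    show "insert z E \<subseteq> X" using EX z(1) U_def by auto
    show "0 \<notin> insert z E" using zE z(2) by auto
    fix a b assume ab: "a \<in> insert z E" "b \<in> insert z E" "a \<noteq> b"
    show "cinner N a b = 0"
    proof -
      { assume "a = z" "b \<in> E" then have ?thesis using z(1) U_def by auto }
      moreover
      { assume "b = z" "a \<in> E"
        then have ?thesis using z(1) U_def cinner_sym[of N a z] by auto }
      moreover
      { assume "a \<in> E" "b \<in> E" then have ?thesis using oE ab(3) orthset_def by auto }
      ultimately show ?thesis using ab by auto
    qed
  next
    fix e assume "e \<in> insert z E"
    then show "\<exists>\<mu>. T e = sc \<mu> e" using z(3) eE by auto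
  qed
  then show ?thesis using zE' fE by (intro exI[of _ "insert z E"]) auto
qed

lemma spectral_subspace:
  assumes X: "vs.subspace X" "X \<subseteq> vfuns N" "\<And>x. x \<in> X \<Longrightarrow> T x \<in> X"
  shows "\<exists>E. good N T X E \<and> X \<subseteq> vs.span E"
proof -
  have "\<exists>E. good N T X E \<and> (X \<subseteq> vs.span E \<or> n \<le> card E)" for n
  proof (induction n)
    case 0
    have "good N T X {}" by (simp add: good_def orthset_def)
    then show ?case by blast
  next
    case (Suc n)
    then obtain E where E: "good N T X E" "X \<subseteq> vs.span E \<or> n \<le> card E" by blast
    show ?case
    proof (cases "X \<subseteq> vs.span E")
      case True then show ?thesis using E by blast
    next
      case False
      then obtain x where "x \<in> X" "x \<notin> vs.span E" by blast
      from step[OF X E(1) this] obtain E' where "good N T X E'" "card E' = Suc (card E)" by blast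
      then show ?thesis using E False by (intro exI[of _ E']) auto
    qed
  qed
  from this[of "Suc (card (Dl N))"] obtain E where
    E: "good N T X E" "X \<subseteq> vs.span E \<or> Suc (card (Dl N)) \<le> card E" by blast
  have "card E \<le> card (Dl N)"
    using E(1) X(2) unfolding good_def by (intro orth_card_bound) auto
  then show ?thesis using E by auto
qed

end


subsection \<open>Concrete operator\<close>

definition flip :: "nat \<Rightarrow> nat set \<Rightarrow> nat set" where
  "flip i v = v - {i} \<union> ({i} - v)"

lemma flip_flip[simp]: "flip i (flip i v) = v"
  by (auto simp: flip_def)

lemma flip_cube: "v \<in> cube_vertices N \<Longrightarrow> i < N \<Longrightarrow> flip i v \<in> cube_vertices N"
  by (auto simp: flip_def cube_vertices_def)

lemma sum_flip:
  assumes "i < N"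
  shows "(\<Sum>v\<in>cube_vertices N. F (flip i v)) = (\<Sum>v\<in>cube_vertices N. F v)"
  by (rule sum.reindex_bij_witness[of _ "flip i" "flip i"]) (auto simp: flip_cube assms)

lemma lap_flip: "cube_laplacian N f v =
   (if v \<in> cube_vertices N then (\<Sum>i<N. f v - f (flip i v)) else 0)"
  by (simp add: cube_laplacian_def flip_def)

lemma lap_herm: "cinner N (cube_laplacian N f) g = cinner N f (cube_laplacian N g)"
proof -
  let ?C = "cube_vertices N"
  have "cinner N (cube_laplacian N f) g = (\<Sum>v\<in>?C. \<Sum>i<N. (f v - f (flip i v)) * cnj (g v))"
    by (simp add: cinner_def lap_flip sum_distrib_right)
  also have "\<dots> = (\<Sum>i<N. \<Sum>v\<in>?C. f v * cnj (g v) - f (flip i v) * cnj (g v))"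
    by (subst sum.swap) (simp add: algebra_simps)
  also have "\<dots> = (\<Sum>i<N. (\<Sum>v\<in>?C. f v * cnj (g v)) - (\<Sum>v\<in>?C. f (flip i v) * cnj (g v)))"
    by (simp add: sum_subtractf)
  also have "\<dots> = (\<Sum>i<N. (\<Sum>v\<in>?C. f v * cnj (g v)) - (\<Sum>v\<in>?C. f v * cnj (g (flip i v))))"
  proof (rule sum.cong[OF refl])
    fix i assume "i \<in> {..<N}"
    then have "(\<Sum>v\<in>?C. f (flip i v) * cnj (g (flip i (flip i v)))) = (\<Sum>v\<in>?C. f v * cnj (g (flip i v)))"
      by (intro sum_flip[of i N "\<lambda>w. f w * cnj (g (flip i w))"]) auto
    then show "(\<Sum>v\<in>?C. f v * cnj (g v)) - (\<Sum>v\<in>?C. f (flip i v) * cnj (g v)) =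
        (\<Sum>v\<in>?C. f v * cnj (g v)) - (\<Sum>v\<in>?C. f v * cnj (g (flip i v)))" by simp
  qed
  also have "\<dots> = (\<Sum>i<N. \<Sum>v\<in>?C. f v * cnj (g v) - f v * cnj (g (flip i v)))"
    by (simp add: sum_subtractf)
  also have "\<dots> = (\<Sum>v\<in>?C. \<Sum>i<N. f v * cnj (g v - g (flip i v)))"
    by (subst sum.swap) (simp add: algebra_simps)
  also have "\<dots> = cinner N f (cube_laplacian N g)"
    by (simp add: cinner_def lap_flip sum_distrib_left cnj_sum)
  finally show ?thesis .
qed

lemma empty_cube[simp]: "{} \<in> cube_vertices N" by (simp add: cube_vertices_def)
lemma full_cube[simp]: "{..<N} \<in> cube_vertices N" by (simp add: cube_vertices_def)
lemma empty_ne_full: "N \<ge> 1 \<Longrightarrow> {} \<noteq> ({..<N}::nat set)"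
  by (metis empty_iff lessThan_iff less_le_trans zero_less_one)

lemma two_point_sum:
  assumes "finite S" "a \<in> S" "b \<in> S" "a \<noteq> b"
  shows "(\<Sum>v\<in>S. (if v = a then A else 0) + (if v = b then B else 0)) = A + B"
  using assms by (simp add: sum.distrib)

lemma corner_expand:
  assumes "N \<ge> 1"
  shows "corner_op N \<alpha> f v = (if v = {} then f {} - f {..<N} / \<alpha> else 0)
      + (if v = {..<N} then f {..<N} - \<alpha> * f {} else 0)"
  using empty_ne_full[OF assms] by (auto simp: corner_op_def)

lemma corner_herm:
  assumes N: "N \<ge> 1" and a: "cmod \<alpha> = 1"
  shows "cinner N (corner_op N \<alpha> f) g = cinner N f (corner_op N \<alpha> g)"
proof -
  have ne: "{} \<noteq> ({..<N}::nat set)" using empty_ne_full[OF N] .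
  have a0: "\<alpha> \<noteq> 0" using a by auto
  have ca: "cnj \<alpha> = 1 / \<alpha>"
  proof -
    have "\<alpha> * cnj \<alpha> = 1" using a by (simp add: complex_norm_square[symmetric])
    then show ?thesis using a0 by (simp add: field_simps)
  qed
  have "cinner N (corner_op N \<alpha> f) g = (\<Sum>v\<in>cube_vertices N.
      (if v = {} then (f {} - f {..<N} / \<alpha>) * cnj (g {}) else 0) +
      (if v = {..<N} then (f {..<N} - \<alpha> * f {}) * cnj (g {..<N}) else 0))"
    unfolding cinner_def by (rule sum.cong) (use ne in \<open>auto simp: corner_expand[OF N]\<close>)
  also have "\<dots> = (f {} - f {..<N} / \<alpha>) * cnj (g {}) + (f {..<N} - \<alpha> * f {}) * cnj (g {..<N})"
    using ne by (intro two_point_sum) auto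
  also have "\<dots> = f {} * cnj (g {} - g {..<N} / \<alpha>) + f {..<N} * cnj (g {..<N} - \<alpha> * g {})"
    using a0 by (simp add: ca field_simps)
  also have "\<dots> = (\<Sum>v\<in>cube_vertices N.
      (if v = {} then f {} * cnj (g {} - g {..<N} / \<alpha>) else 0) +
      (if v = {..<N} then f {..<N} * cnj (g {..<N} - \<alpha> * g {}) else 0))"
    using ne by (intro two_point_sum[symmetric]) auto
  also have "\<dots> = cinner N f (corner_op N \<alpha> g)"
    unfolding cinner_def by (rule sum.cong) (use ne in \<open>auto simp: corner_expand[OF N]\<close>)
  finally show ?thesis .
qed

lemma aug_herm:
  assumes N: "N \<ge> 1" and a: "cmod \<alpha> = 1"
  shows "cinner N (aug_laplacian N \<alpha> f) g = cinner N f (aug_laplacian N \<alpha> g)"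
proof -
  have "cinner N (aug_laplacian N \<alpha> f) g = cinner N (cube_laplacian N f) g + cinner N (corner_op N \<alpha> f) g"
    by (simp add: cinner_def aug_laplacian_def algebra_simps sum.distrib)
  also have "\<dots> = cinner N f (cube_laplacian N g) + cinner N f (corner_op N \<alpha> g)"
    by (simp add: lap_herm corner_herm[OF N a])
  also have "\<dots> = cinner N f (aug_laplacian N \<alpha> g)"
    by (simp add: cinner_def aug_laplacian_def algebra_simps sum.distrib)
  finally show ?thesis .
qed

lemma lap_add: "cube_laplacian N (\<lambda>v. f v + g v) v = cube_laplacian N f v + cube_laplacian N g v"
proof -
  have "(\<Sum>i<N. f v + g v - (f (flip i v) + g (flip i v))) =
      (\<Sum>i<N. (f v - f (flip i v)) + (g v - g (flip i v)))" by (rule sum.cong) auto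
  then show ?thesis by (simp add: lap_flip sum.distrib)
qed

lemma lap_sc: "cube_laplacian N (\<lambda>v. c * f v) v = c * cube_laplacian N f v"
proof -
  have "(\<Sum>i<N. c * f v - c * f (flip i v)) = (\<Sum>i<N. c * (f v - f (flip i v)))"
    by (rule sum.cong) (auto simp: algebra_simps)
  then show ?thesis by (simp add: lap_flip sum_distrib_left)
qed

lemma aug_herm_locale:
  assumes N: "N \<ge> 1" and a: "cmod \<alpha> = 1"
  shows "herm N (aug_laplacian N \<alpha>)"
proof
  fix f g :: "nat set \<Rightarrow> complex" and c :: complex
  show "aug_laplacian N \<alpha> (\<lambda>v. f v + g v) = (\<lambda>v. aug_laplacian N \<alpha> f v + aug_laplacian N \<alpha> g v)"
    by (auto simp: fun_eq_iff aug_laplacian_def lap_add corner_op_def algebra_simps add_divide_distrib)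
  show "aug_laplacian N \<alpha> (\<lambda>v. c * f v) = (\<lambda>v. c * aug_laplacian N \<alpha> f v)"
    by (auto simp: fun_eq_iff aug_laplacian_def lap_sc corner_op_def algebra_simps)
  show "cinner N (aug_laplacian N \<alpha> f) g = cinner N f (aug_laplacian N \<alpha> g)"
    by (rule aug_herm[OF N a])
next
  fix f :: "nat set \<Rightarrow> complex"
  show "aug_laplacian N \<alpha> f \<in> vfuns N"
    by (auto simp: vfuns_def aug_laplacian_def cube_laplacian_def corner_op_def)
qed


subsection \<open>Characters\<close>

definition c0 :: "nat \<Rightarrow> complex" where
  "c0 N = complex_of_real (2 powr (- real N / 2))"

lemma c0_nz: "c0 N \<noteq> 0" by (simp add: c0_def)

lemma hgamma_alt: "hgamma N \<gamma> v = (if v \<in> cube_vertices N then c0 N * (-1) ^ card (v \<inter> \<gamma>) else 0)"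
  by (simp add: hgamma_def c0_def)

lemma sign_flip:
  assumes "finite v"
  shows "(-1::complex) ^ card (flip i v \<inter> \<gamma>) = (if i \<in> \<gamma> then -1 else 1) * (-1) ^ card (v \<inter> \<gamma>)"
proof (cases "i \<in> v")
  case True
  then have fl: "flip i v \<inter> \<gamma> = (v \<inter> \<gamma>) - {i}" by (auto simp: flip_def)
  show ?thesis
  proof (cases "i \<in> \<gamma>")
    case True
    with \<open>i \<in> v\<close> have iv: "i \<in> v \<inter> \<gamma>" by auto
    then have "card (v \<inter> \<gamma>) > 0" using assms by (auto simp: card_gt_0_iff)
    then obtain m where m: "card (v \<inter> \<gamma>) = Suc m" by (cases "card (v \<inter> \<gamma>)") auto
    have "card (flip i v \<inter> \<gamma>) = m" unfolding fl card_Diff_singleton[OF iv] m by simp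
    then show ?thesis using True m by simp
  next
    case False
    then have "flip i v \<inter> \<gamma> = v \<inter> \<gamma>" using fl by auto
    then show ?thesis using False by simp
  qed
next
  case False
  then have fl: "flip i v = insert i v" by (auto simp: flip_def)
  show ?thesis
  proof (cases "i \<in> \<gamma>")
    case True
    then have "flip i v \<inter> \<gamma> = insert i (v \<inter> \<gamma>)" using fl by auto
    moreover have "card (insert i (v \<inter> \<gamma>)) = Suc (card (v \<inter> \<gamma>))"
      using False assms by simp
    ultimately show ?thesis using True by simp
  next
    case False
    then have "flip i v \<inter> \<gamma> = v \<inter> \<gamma>" using fl by auto
    then show ?thesis using False by simp
  qed
qed

lemma cube_finite_elem: "v \<in> cube_vertices N \<Longrightarrow> finite v"
  by (auto simp: cube_vertices_def intro: finite_subset)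

lemma hgamma_flip:
  assumes "v \<in> cube_vertices N" "i < N"
  shows "hgamma N \<gamma> (flip i v) = (if i \<in> \<gamma> then - hgamma N \<gamma> v else hgamma N \<gamma> v)"
  using assms flip_cube[OF assms] sign_flip[OF cube_finite_elem[OF assms(1)], of i \<gamma>]
  by (simp add: hgamma_alt)

lemma lap_hgamma:
  assumes "\<gamma> \<subseteq> {..<N}"
  shows "cube_laplacian N (hgamma N \<gamma>) v = 2 * of_nat (card \<gamma>) * hgamma N \<gamma> v"
proof (cases "v \<in> cube_vertices N")
  case True
  have "(\<Sum>i<N. hgamma N \<gamma> v - hgamma N \<gamma> (flip i v)) = (\<Sum>i<N. if i \<in> \<gamma> then 2 * hgamma N \<gamma> v else 0)"
    by (rule sum.cong) (auto simp: hgamma_flip[OF True])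
  also have "\<dots> = (\<Sum>i\<in>{..<N} \<inter> \<gamma>. 2 * hgamma N \<gamma> v)"
    by (rule sum.inter_restrict[OF finite_lessThan, symmetric])
  also have "{..<N} \<inter> \<gamma> = \<gamma>" using assms by auto
  finally show ?thesis using True by (simp add: lap_flip)
next
  case False
  then show ?thesis by (simp add: lap_flip hgamma_def)
qed

lemma lap_sum: "cube_laplacian N (\<lambda>v. \<Sum>\<gamma>\<in>G. F \<gamma> v) v = (\<Sum>\<gamma>\<in>G. cube_laplacian N (F \<gamma>) v)"
  by (simp add: lap_flip sum_subtractf[symmetric] sum.swap[of _ G] sum.If_cases)

definition Gam :: "nat \<Rightarrow> nat \<Rightarrow> nat set set" where
  "Gam N k = {\<gamma>\<in>cube_vertices N. card \<gamma> = k}"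

lemma hsum_alt: "hsum N k = (\<lambda>v. \<Sum>\<gamma>\<in>Gam N k. hgamma N \<gamma> v)"
  by (simp add: fun_eq_iff hsum_def Gam_def)

lemma lap_hsum: "cube_laplacian N (hsum N k) = (\<lambda>v. 2 * of_nat k * hsum N k v)"
proof
  fix v
  have "cube_laplacian N (hsum N k) v = (\<Sum>\<gamma>\<in>Gam N k. cube_laplacian N (hgamma N \<gamma>) v)"
    unfolding hsum_alt by (rule lap_sum)
  also have "\<dots> = (\<Sum>\<gamma>\<in>Gam N k. 2 * of_nat k * hgamma N \<gamma> v)"
    by (rule sum.cong) (auto simp: Gam_def cube_vertices_def lap_hgamma)
  also have "\<dots> = 2 * of_nat k * hsum N k v"
    by (simp add: hsum_alt sum_distrib_left)
  finally show "cube_laplacian N (hsum N k) v = 2 * of_nat k * hsum N k v" .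
qed

lemma char_sum:
  assumes "finite A"
  shows "(\<Sum>\<gamma>\<in>Pow A. (-1::complex) ^ card (v \<inter> \<gamma>)) = (if v \<inter> A = {} then 2 ^ card A else 0)"
  using assms
proof (induction A rule: finite_induct)
  case empty
  then show ?case by simp
next
  case (insert a A)
  have disj: "Pow A \<inter> insert a ` Pow A = {}" using insert(2) by auto
  have inj: "inj_on (insert a) (Pow A)" using insert(2) unfolding inj_on_def by (metis Pow_iff insert_ident subsetD)
  have fin: "finite (Pow A)" using insert(1) by simp
  have "(\<Sum>\<gamma>\<in>Pow (insert a A). (-1::complex) ^ card (v \<inter> \<gamma>)) =
      (\<Sum>\<gamma>\<in>Pow A. (-1::complex) ^ card (v \<inter> \<gamma>)) + (\<Sum>\<gamma>\<in>insert a ` Pow A. (-1::complex) ^ card (v \<inter> \<gamma>))"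
    unfolding Pow_insert using disj fin by (intro sum.union_disjoint) auto
  also have "(\<Sum>\<gamma>\<in>insert a ` Pow A. (-1::complex) ^ card (v \<inter> \<gamma>)) =
      (\<Sum>\<gamma>\<in>Pow A. (-1::complex) ^ card (v \<inter> insert a \<gamma>))"
    by (rule sum.reindex[OF inj, unfolded comp_def])
  also have "\<dots> = (\<Sum>\<gamma>\<in>Pow A. (if a \<in> v then -1 else 1) * (-1::complex) ^ card (v \<inter> \<gamma>))"
  proof (rule sum.cong[OF refl])
    fix \<gamma> assume g: "\<gamma> \<in> Pow A"
    then have an: "a \<notin> v \<inter> \<gamma>" using insert(2) by auto
    have fg: "finite (v \<inter> \<gamma>)" using g insert(1) by (auto intro: finite_subset)
    show "(-1::complex) ^ card (v \<inter> insert a \<gamma>) = (if a \<in> v then -1 else 1) * (-1) ^ card (v \<inter> \<gamma>)"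
    proof (cases "a \<in> v")
      case True
      then have "v \<inter> insert a \<gamma> = insert a (v \<inter> \<gamma>)" by auto
      then show ?thesis using True an fg by simp
    next
      case False
      then have "v \<inter> insert a \<gamma> = v \<inter> \<gamma>" by auto
      then show ?thesis using False by simp
    qed
  qed
  finally show ?case using insert(1,2) insert(3)
    by (auto simp: sum_distrib_left[symmetric])
qed


lemma card_le_N: "\<gamma> \<in> cube_vertices N \<Longrightarrow> card \<gamma> \<le> N"
  using card_mono[of "{..<N}" \<gamma>] by (auto simp: cube_vertices_def)

lemma sum_hsum_group:
  "(\<Sum>k\<le>N. F k * hsum N k v) = (\<Sum>\<gamma>\<in>cube_vertices N. F (card \<gamma>) * hgamma N \<gamma> v)"
proof -
  have "(\<Sum>\<gamma>\<in>cube_vertices N. F (card \<gamma>) * hgamma N \<gamma> v) =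
      (\<Sum>k\<le>N. \<Sum>\<gamma>\<in>{\<gamma>. \<gamma> \<in> cube_vertices N \<and> card \<gamma> = k}. F (card \<gamma>) * hgamma N \<gamma> v)"
    by (rule sum.group[symmetric]) (auto simp: card_le_N)
  also have "\<dots> = (\<Sum>k\<le>N. F k * hsum N k v)"
    by (rule sum.cong[OF refl]) (simp add: hsum_def sum_distrib_left)
  finally show ?thesis by simp
qed

lemma delta0:
  "(if v = {} then 1 else 0) = (\<Sum>k\<le>N. (1 / (c0 N * 2 ^ N)) * hsum N k v)"
proof (cases "v \<in> cube_vertices N")
  case True
  then have vs: "v \<subseteq> {..<N}" by (simp add: cube_vertices_def)
  have "(\<Sum>k\<le>N. (1 / (c0 N * 2 ^ N)) * hsum N k v) =
      (1 / (c0 N * 2 ^ N)) * (\<Sum>\<gamma>\<in>cube_vertices N. hgamma N \<gamma> v)"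
    by (subst sum_hsum_group[of "\<lambda>_. 1 / (c0 N * 2 ^ N)"]) (simp add: sum_distrib_left)
  also have "(\<Sum>\<gamma>\<in>cube_vertices N. hgamma N \<gamma> v) = c0 N * (\<Sum>\<gamma>\<in>Pow {..<N}. (-1) ^ card (v \<inter> \<gamma>))"
    using True by (simp add: hgamma_alt sum_distrib_left cube_vertices_def)
  also have "\<dots> = c0 N * (if v = {} then 2 ^ N else 0)"
    using vs by (subst char_sum) (auto simp: Int_absorb2)
  finally show ?thesis using c0_nz[of N] by simp
next
  case False
  then have "v \<noteq> {}" by auto
  then show ?thesis using False by (simp add: hsum_def hgamma_def)
qed

lemma delta1:
  "(if v = {..<N} then 1 else 0) = (\<Sum>k\<le>N. ((1 / (c0 N * 2 ^ N)) * (-1) ^ k) * hsum N k v)"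
proof (cases "v \<in> cube_vertices N")
  case True
  then have vs: "v \<subseteq> {..<N}" by (simp add: cube_vertices_def)
  have "(\<Sum>k\<le>N. ((1 / (c0 N * 2 ^ N)) * (-1) ^ k) * hsum N k v) =
      (1 / (c0 N * 2 ^ N)) * (\<Sum>\<gamma>\<in>cube_vertices N. (-1) ^ card \<gamma> * hgamma N \<gamma> v)"
    by (subst sum_hsum_group[of "\<lambda>k. (1 / (c0 N * 2 ^ N)) * (-1) ^ k"]) (simp add: sum_distrib_left mult.assoc)
  also have "(\<Sum>\<gamma>\<in>cube_vertices N. (-1) ^ card \<gamma> * hgamma N \<gamma> v) =
      c0 N * (\<Sum>\<gamma>\<in>Pow {..<N}. (-1) ^ card (({..<N} - v) \<inter> \<gamma>))"
  proof -
    have "(-1::complex) ^ card \<gamma> * (-1) ^ card (v \<inter> \<gamma>) = (-1) ^ card (({..<N} - v) \<inter> \<gamma>)"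
      if g: "\<gamma> \<subseteq> {..<N}" for \<gamma>
    proof -
      have fg: "finite \<gamma>" using g by (auto intro: finite_subset)
      have "\<gamma> = (v \<inter> \<gamma>) \<union> (({..<N} - v) \<inter> \<gamma>)" using g by auto
      then have "card \<gamma> = card (v \<inter> \<gamma>) + card (({..<N} - v) \<inter> \<gamma>)"
        using fg by (metis Diff_disjoint card_Un_disjoint finite_Int inf_commute inf_left_commute
            inf_sup_distrib2 Int_empty_left)
      then have "(-1::complex) ^ card \<gamma> * (-1) ^ card (v \<inter> \<gamma>) =
          ((-1) ^ card (v \<inter> \<gamma>)) ^ 2 * (-1) ^ card (({..<N} - v) \<inter> \<gamma>)"
        by (simp add: power_add power2_eq_square)
      also have "((-1::complex) ^ card (v \<inter> \<gamma>)) ^ 2 = 1"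
        by (simp add: power_mult[symmetric] mult.commute[of _ 2] power_mult)
      finally show ?thesis by simp
    qed
    then show ?thesis using True
      by (simp add: hgamma_alt sum_distrib_left cube_vertices_def mult.left_commute)
  qed
  also have "\<dots> = c0 N * (if v = {..<N} then 2 ^ N else 0)"
    using vs by (subst char_sum) auto
  finally show ?thesis using c0_nz[of N] by simp
next
  case False
  then have "v \<noteq> {..<N}" by auto
  then show ?thesis using False by (simp add: hsum_def hgamma_def)
qed

lemma hsum_vfuns: "hsum N k \<in> vfuns N"
  by (simp add: vfuns_def hsum_def hgamma_def)

lemma Gam_ne: "k \<le> N \<Longrightarrow> Gam N k \<noteq> {}"
proof -
  assume "k \<le> N"
  then have "{..<k} \<in> Gam N k" by (auto simp: Gam_def cube_vertices_def)
  then show ?thesis by auto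
qed

lemma hsum_nz: assumes "k \<le> N" shows "hsum N k \<noteq> 0"
proof -
  have fin: "finite (Gam N k)" by (simp add: Gam_def)
  have "hsum N k {} = c0 N * of_nat (card (Gam N k))"
    by (simp add: hsum_alt hgamma_alt)
  moreover have "card (Gam N k) > 0" using Gam_ne[OF assms] fin by (simp add: card_gt_0_iff)
  ultimately have "hsum N k {} \<noteq> 0" using c0_nz[of N] by simp
  then show ?thesis by auto
qed

lemma cinner_lam_left: "cinner N (\<lambda>v. c * f v) g = c * cinner N f g"
  by (simp add: cinner_def sum_distrib_left mult.assoc)
lemma cinner_lam_right: "cinner N f (\<lambda>v. c * g v) = cnj c * cinner N f g"
  by (simp add: cinner_def sum_distrib_left algebra_simps)

lemma hsum_orth:
  assumes "k \<noteq> l" shows "cinner N (hsum N k) (hsum N l) = 0"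
proof -
  have "cinner N (cube_laplacian N (hsum N k)) (hsum N l) = cinner N (hsum N k) (cube_laplacian N (hsum N l))"
    by (rule lap_herm)
  then have "2 * of_nat k * cinner N (hsum N k) (hsum N l) = 2 * of_nat l * cinner N (hsum N k) (hsum N l)"
    unfolding lap_hsum cinner_lam_left cinner_lam_right by simp
  then show ?thesis using assms by simp
qed

lemma vnorm_nz:
  assumes "f \<in> vfuns N" "f \<noteq> 0" shows "vnorm N f \<noteq> 0"
proof -
  have "complex_of_real (\<Sum>v\<in>cube_vertices N. (cmod (f v))\<^sup>2) \<noteq> 0"
    using cinner_self_nonzero[OF assms] by (metis cinner_self_real)
  then have "(\<Sum>v\<in>cube_vertices N. (cmod (f v))\<^sup>2) \<noteq> 0" by (metis of_real_0)
  moreover have "(\<Sum>v\<in>cube_vertices N. (cmod (f v))\<^sup>2) \<ge> 0" by (simp add: sum_nonneg)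
  ultimately show ?thesis unfolding vnorm_def by simp
qed

lemma hsum_hnk: assumes "k \<le> N" shows "hsum N k v = complex_of_real (vnorm N (hsum N k)) * hnk N k v"
  using vnorm_nz[OF hsum_vfuns hsum_nz[OF assms]] by (simp add: hnk_def)


context herm
begin

lemma T_plus: "T (f + g) = T f + T g"
  using T_add[of f g] by (simp add: plus_fun_def)

lemma T_scale: "T (sc c f) = sc c (T f)"
  using T_sc[of c f] by (simp add: sc_def)

lemma T_span_inv:
  assumes "\<And>h. h \<in> H \<Longrightarrow> T h \<in> vs.span H" "x \<in> vs.span H"
  shows "T x \<in> vs.span H"
proof -
  have "vs.subspace {x. T x \<in> vs.span H}"
    unfolding vs.subspace_def
    by (auto simp: T_zero' T_plus T_scale intro: vs.span_add vs.span_scale vs.span_zero)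
  then show ?thesis using vs.span_induct[OF assms(2), of "\<lambda>x. T x \<in> vs.span H"] assms(1) by auto
qed

end

lemma perp_span:
  assumes "\<And>h. h \<in> S \<Longrightarrow> cinner N f h = 0" "x \<in> vs.span S"
  shows "cinner N f x = 0"
proof -
  have "vs.subspace {x. cinner N f x = 0}"
    unfolding vs.subspace_def by (auto simp: cinner_add_right cinner_sc_right)
  then show ?thesis using vs.span_induct[OF assms(2), of "\<lambda>x. cinner N f x = 0"] assms(1) by auto
qed

lemma cinner_delta: "w \<in> cube_vertices N \<Longrightarrow> cinner N f (\<lambda>v. if v = w then 1 else 0) = f w"
  by (simp add: cinner_def if_distrib cong: if_cong)

theorem lemma4:
  fixes N :: nat and \<alpha> :: complex
  assumes "N \<ge> 1" and "cmod \<alpha> = 1"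
  shows "\<exists>B. finite B \<and> B \<subseteq> vfuns N \<and> lin_indep N B \<and> spans N B
           \<and> (\<forall>h\<in>B. \<exists>mu. is_eigvec N (aug_laplacian N \<alpha>) h mu
                  \<and> (dirichlet_eigvec N h mu
                     \<or> (\<exists>c. h = (\<lambda>v. \<Sum>\<kappa>\<le>N. c \<kappa> * hnk N \<kappa> v))))
           \<and> (\<exists>S\<subseteq>B. card S = N + 1
                  \<and> (\<forall>h\<in>S. \<exists>c. h = (\<lambda>v. \<Sum>\<kappa>\<le>N. c \<kappa> * hnk N \<kappa> v))
                  \<and> (\<forall>g\<in>S. \<forall>h\<in>S. g \<noteq> h \<longrightarrow> cinner N g h = 0))"
proof -
  interpret herm N "aug_laplacian N \<alpha>" by (rule aug_herm_locale[OF assms])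
  let ?T = "aug_laplacian N \<alpha>"
  define H where "H = hsum N ` {..N}"
  have finH: "finite H" by (simp add: H_def)
  have HV: "H \<subseteq> vfuns N" by (auto simp: H_def hsum_vfuns)
  have inj: "inj_on (hsum N) {..N}"
  proof (rule inj_onI, rule ccontr)
    fix k l assume kl: "k \<in> {..N}" "l \<in> {..N}" "hsum N k = hsum N l" "k \<noteq> l"
    then have "cinner N (hsum N k) (hsum N k) = 0" using hsum_orth[of k l N] by simp
    then show False using cinner_self_nonzero[OF hsum_vfuns hsum_nz] kl by simp
  qed
  have cardH: "card H = N + 1" using inj by (simp add: H_def card_image)
  have oH: "orthset N H" unfolding orthset_def H_def by (auto, metis hsum_orth)
  have zH: "0 \<notin> H" using hsum_nz by (auto simp: H_def)
  have indH: "vs.independent H" by (rule orth_independent[OF finH HV oH zH])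
  have spanHV: "vs.span H \<subseteq> vfuns N" by (rule vs.span_minimal[OF HV vfuns_subspace])
  define c1 where "c1 = 1 / (c0 N * 2 ^ N)"
  have d0: "(\<lambda>v. if v = {} then 1 else 0) \<in> vs.span H"
  proof -
    have "(\<lambda>v. if v = {} then 1 else 0) = (\<Sum>k\<le>N. sc c1 (hsum N k))"
      by (simp add: fun_eq_iff sum_fun_apply delta0[of _ N] c1_def)
    also have "\<dots> \<in> vs.span H"
      by (intro vs.span_sum vs.span_scale vs.span_base) (auto simp: H_def)
    finally show ?thesis .
  qed
  have d1: "(\<lambda>v. if v = {..<N} then 1 else 0) \<in> vs.span H"
  proof -
    have "(\<lambda>v. if v = {..<N} then 1 else 0) = (\<Sum>k\<le>N. sc (c1 * (-1) ^ k) (hsum N k))"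
      by (simp add: fun_eq_iff sum_fun_apply delta1[of _ N] c1_def)
    also have "\<dots> \<in> vs.span H"
      by (intro vs.span_sum vs.span_scale vs.span_base) (auto simp: H_def)
    finally show ?thesis .
  qed
  have corner_span: "corner_op N \<alpha> f \<in> vs.span H" for f
  proof -
    have "corner_op N \<alpha> f = sc (f {} - f {..<N} / \<alpha>) (\<lambda>v. if v = {} then 1 else 0)
        + sc (f {..<N} - \<alpha> * f {}) (\<lambda>v. if v = {..<N} then 1 else 0)"
      by (simp add: fun_eq_iff corner_expand[OF assms(1)])
    then show ?thesis using d0 d1 by (auto intro: vs.span_add vs.span_scale)
  qed
  have T_H: "?T h \<in> vs.span H" if h: "h \<in> H" for h
  proof -
    obtain k where k: "k \<le> N" "h = hsum N k" using h H_def by auto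
    have "?T h = sc (2 * of_nat k) h + corner_op N \<alpha> h"
      unfolding k(2) by (simp add: fun_eq_iff aug_laplacian_def lap_hsum)
    then show ?thesis using h corner_span by (auto intro: vs.span_add vs.span_scale vs.span_base)
  qed
  have X1: "vs.subspace (vs.span H)" "vs.span H \<subseteq> vfuns N" "\<And>x. x \<in> vs.span H \<Longrightarrow> ?T x \<in> vs.span H"
    using spanHV T_span_inv[OF T_H] by auto
  obtain G where G: "good N ?T (vs.span H) G" "vs.span H \<subseteq> vs.span G"
    using spectral_subspace[OF X1] by blast
  define X2 where "X2 = {f \<in> vfuns N. \<forall>h\<in>H. cinner N f h = 0}"
  have X2: "vs.subspace X2" "X2 \<subseteq> vfuns N" "\<And>x. x \<in> X2 \<Longrightarrow> ?T x \<in> X2"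
  proof -
    show "vs.subspace X2" using vfuns_subspace[of N]
      unfolding X2_def vs.subspace_def by (auto simp: cinner_add_left cinner_sc_left)
    show "X2 \<subseteq> vfuns N" by (auto simp: X2_def)
    fix x assume x: "x \<in> X2"
    have "cinner N (?T x) h = 0" if h: "h \<in> H" for h
      using x perp_span[of H N x "?T h"] T_H[OF h] by (simp add: T_herm X2_def)
    then show "?T x \<in> X2" using x T_V by (auto simp: X2_def)
  qed
  obtain D where D: "good N ?T X2 D" "X2 \<subseteq> vs.span D"
    using spectral_subspace[OF X2] by blast
  define B where "B = G \<union> D"
  have fG: "finite G" and GX: "G \<subseteq> vs.span H" and oG: "orthset N G" and zG: "0 \<notin> G"
    and eG: "\<And>e. e \<in> G \<Longrightarrow> \<exists>\<mu>. ?T e = sc \<mu> e"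
    using G(1) unfolding good_def by auto
  have fD: "finite D" and DX: "D \<subseteq> X2" and oD: "orthset N D" and zD: "0 \<notin> D"
    and eD: "\<And>e. e \<in> D \<Longrightarrow> \<exists>\<mu>. ?T e = sc \<mu> e"
    using D(1) unfolding good_def by auto
  have GV: "G \<subseteq> vfuns N" using GX spanHV by auto
  have DV: "D \<subseteq> vfuns N" using DX X2(2) by auto
  have perpX2: "cinner N d x = 0" if "d \<in> X2" "x \<in> vs.span H" for d x
    using perp_span[of H N d x] that by (auto simp: X2_def)
  have oB: "orthset N B" unfolding orthset_def B_def
  proof (intro ballI impI)
    fix a b assume ab: "a \<in> G \<union> D" "b \<in> G \<union> D" "a \<noteq> b"
    show "cinner N a b = 0"
    proof -
      { assume "a \<in> G" "b \<in> G" then have ?thesis using oG ab(3) by (auto simp: orthset_def) }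
      moreover { assume "a \<in> D" "b \<in> D" then have ?thesis using oD ab(3) by (auto simp: orthset_def) }
      moreover { assume "a \<in> D" "b \<in> G" then have ?thesis using perpX2 DX GX by auto }
      moreover { assume "a \<in> G" "b \<in> D"
        then have "cinner N b a = 0" using perpX2 DX GX by auto
        then have ?thesis using cinner_sym[of N a b] by simp }
      ultimately show ?thesis using ab by blast
    qed
  qed
  have fB: "finite B" using fG fD by (simp add: B_def)
  have BV: "B \<subseteq> vfuns N" using GV DV by (simp add: B_def)
  have zB: "0 \<notin> B" using zG zD by (simp add: B_def)
  have li: "lin_indep N B"
    unfolding lin_indep_def
  proof (intro allI impI ballI)
    fix c b assume s: "\<forall>v. (\<Sum>b\<in>B. c b * b v) = 0" and b: "b \<in> B"
    have "(\<Sum>e\<in>B. sc (c e) e) = 0" using s by (simp add: fun_eq_iff sum_fun_apply)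
    then show "c b = 0" by (rule orth_coeffs_zero[OF fB BV oB zB _ b])
  qed
  have sp: "spans N B"
    unfolding spans_def
  proof
    fix f assume f: "f \<in> vfuns N"
    define p where "p = (\<Sum>g\<in>G. sc (cinner N f g / cinner N g g) g)"
    have pG: "p \<in> vs.span G" unfolding p_def by (intro vs.span_sum vs.span_scale vs.span_base)
    have pV: "p \<in> vfuns N" using pG vs.span_minimal[OF GV vfuns_subspace] by auto
    have rG: "cinner N (f - p) g = 0" if g: "g \<in> G" for g
    proof -
      have ne: "cinner N g g \<noteq> 0" using g GV zG by (intro cinner_self_nonzero) auto
      show ?thesis unfolding p_def cinner_diff_left orth_sum_inner[OF fG oG g] using ne by simp
    qed
    have "f - p \<in> X2"
      unfolding X2_def
    proof (intro CollectI conjI ballI)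
      show "f - p \<in> vfuns N" using f pV vfuns_subspace[of N] by (intro vs.subspace_diff) auto
      fix h assume "h \<in> H"
      then have "h \<in> vs.span G" using G(2) vs.span_base[of h H] by auto
      then show "cinner N (f - p) h = 0" using perp_span[of G N "f - p" h] rG by auto
    qed
    then have "f - p \<in> vs.span D" using D(2) by auto
    then have "f - p \<in> vs.span B" using vs.span_mono[of D B] by (auto simp: B_def)
    moreover have "p \<in> vs.span B" using pG vs.span_mono[of G B] by (auto simp: B_def)
    ultimately have "p + (f - p) \<in> vs.span B" by (intro vs.span_add)
    then have "f \<in> vs.span B" by simp
    then show "\<exists>c. f = (\<lambda>v. \<Sum>b\<in>B. c b * b v)" using span_finite_explicit[OF fB] by blast
  qed
  have typeii: "\<exists>c. x = (\<lambda>v. \<Sum>\<kappa>\<le>N. c \<kappa> * hnk N \<kappa> v)" if x: "x \<in> vs.span H" for x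
  proof -
    obtain u where u: "x = (\<lambda>v. \<Sum>b\<in>H. u b * b v)" using x span_finite_explicit[OF finH] by blast
    have "(\<lambda>v. \<Sum>b\<in>H. u b * b v) = (\<lambda>v. \<Sum>\<kappa>\<le>N. u (hsum N \<kappa>) * hsum N \<kappa> v)"
      unfolding H_def by (subst sum.reindex[OF inj]) simp
    also have "\<dots> = (\<lambda>v. \<Sum>\<kappa>\<le>N. (u (hsum N \<kappa>) * complex_of_real (vnorm N (hsum N \<kappa>))) * hnk N \<kappa> v)"
      by (intro ext sum.cong refl) (simp add: hsum_hnk mult.assoc)
    finally have "x = (\<lambda>v. \<Sum>\<kappa>\<le>N. (\<lambda>\<kappa>. u (hsum N \<kappa>) * complex_of_real (vnorm N (hsum N \<kappa>))) \<kappa> * hnk N \<kappa> v)"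
      using u by simp
    then show ?thesis by (intro exI[of _ "\<lambda>\<kappa>. u (hsum N \<kappa>) * complex_of_real (vnorm N (hsum N \<kappa>))"]) simp
  qed
  have eig: "\<exists>mu. is_eigvec N ?T h mu \<and> (dirichlet_eigvec N h mu \<or> (\<exists>c. h = (\<lambda>v. \<Sum>\<kappa>\<le>N. c \<kappa> * hnk N \<kappa> v)))"
    if h: "h \<in> B" for h
  proof -
    obtain \<mu> where mu: "?T h = sc \<mu> h" using h eG eD B_def by blast
    have ev: "is_eigvec N ?T h \<mu>"
      using mu h BV zB by (auto simp: is_eigvec_def sc_def zero_fun_def)
    show ?thesis
    proof (cases "h \<in> G")
      case True
      then show ?thesis using ev typeii GX by blast
    next
      case False
      then have hD: "h \<in> D" using h B_def by auto
      then have hX: "h \<in> X2" using DX by auto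
      have h0: "h {} = 0" using perpX2[OF hX d0] cinner_delta[of "{}" N h] by simp
      have h1: "h {..<N} = 0" using perpX2[OF hX d1] cinner_delta[of "{..<N}" N h] by simp
      have "corner_op N \<alpha> h = (\<lambda>v. 0)" using h0 h1 by (simp add: fun_eq_iff corner_op_def)
      then have "cube_laplacian N h = ?T h" by (simp add: fun_eq_iff aug_laplacian_def)
      then have "dirichlet_eigvec N h \<mu>" using ev h0 h1 by (simp add: dirichlet_eigvec_def is_eigvec_def)
      then show ?thesis using ev by blast
    qed
  qed
  have indG: "vs.independent G" by (rule orth_independent[OF fG GV oG zG])
  have "card G \<le> card H" using vs.independent_span_bound[OF finH indG GX] by simp
  moreover have "card H \<le> card G"
    using vs.independent_span_bound[OF fG indH] G(2) vs.span_superset[of H] by auto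
  ultimately have cardG: "card G = N + 1" using cardH by simp
  show ?thesis
  proof (rule exI[of _ B], intro conjI)
    show "finite B" "B \<subseteq> vfuns N" "lin_indep N B" "spans N B" by (fact fB BV li sp)+
    show "\<forall>h\<in>B. \<exists>mu. is_eigvec N ?T h mu \<and> (dirichlet_eigvec N h mu \<or> (\<exists>c. h = (\<lambda>v. \<Sum>\<kappa>\<le>N. c \<kappa> * hnk N \<kappa> v)))"
      using eig by blast
    show "\<exists>S\<subseteq>B. card S = N + 1 \<and> (\<forall>h\<in>S. \<exists>c. h = (\<lambda>v. \<Sum>\<kappa>\<le>N. c \<kappa> * hnk N \<kappa> v))
        \<and> (\<forall>g\<in>S. \<forall>h\<in>S. g \<noteq> h \<longrightarrow> cinner N g h = 0)"
      using cardG typeii GX oG by (intro exI[of _ G]) (auto simp: B_def orthset_def)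
  qed
qed

end
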